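(* Let $d\ge1$, let $H$ be a hypergraph of $d$-intervals and let $w$ be a weight system on $H$. Then $\tau_w(H)\le 2d^2\,\nu_w(H)$.
   Context: A $d$-interval is a union of at most $d$ pairwise disjoint closed intervals of the real line $\mathbb{R}$. A hypergraph of $d$-intervals is a finite family $H$ of $d$-intervals, regarded as a hypergraph whose vertices are the points of $\mathbb{R}$ and whose edges are the members of $H$. A matching is a set of pairwise disjoint edges. A weight system on $H$ is a function $w:H\to\mathbb{N}$. $\nu_w(H)$ is the maximum of $\sum_{h\in M}w(h)$ over all matchings $M$. A $w$-cover is a finitely supported function $g:\mathbb{R}\to\mathbb{N}$ with $\sum_{v\in h}g(v)\ge w(h)$ for every $h\in H$; $\tau_w(H)$ is the minimum of $\sum_v g(v)$ over all $w$-covers. *)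

theory Defs
  imports Complex_Main "HOL-Library.Disjoint_Sets"
begin

definition d_interval :: "nat \<Rightarrow> real set \<Rightarrow> bool" where
  "d_interval d S \<longleftrightarrow> (\<exists>k (a::nat \<Rightarrow> real) b. 1 \<le> k \<and> k \<le> d \<and>
      (\<forall>i<k. a i \<le> b i) \<and>
      (\<forall>i<k. \<forall>j<k. i \<noteq> j \<longrightarrow> {a i..b i} \<inter> {a j..b j} = {}) \<and>
      S = (\<Union>i<k. {a i..b i}))"

definition matching :: "real set set \<Rightarrow> real set set \<Rightarrow> bool" where
  "matching H M \<longleftrightarrow> M \<subseteq> H \<and> pairwise disjnt M"

definition nu_w :: "real set set \<Rightarrow> (real set \<Rightarrow> nat) \<Rightarrow> nat" where
  "nu_w H w = Max {sum w M | M. matching H M}"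

definition supp_g :: "(real \<Rightarrow> nat) \<Rightarrow> real set" where
  "supp_g g = {v. g v \<noteq> 0}"

definition w_cover :: "real set set \<Rightarrow> (real set \<Rightarrow> nat) \<Rightarrow> (real \<Rightarrow> nat) \<Rightarrow> bool" where
  "w_cover H w g \<longleftrightarrow> finite (supp_g g) \<and> (\<forall>h\<in>H. sum g (h \<inter> supp_g g) \<ge> w h)"

definition tau_w :: "real set set \<Rightarrow> (real set \<Rightarrow> nat) \<Rightarrow> nat" where
  "tau_w H w = Inf {sum g (supp_g g) | g. w_cover H w g}"

end

theory Submission
  imports Defs
begin

definition linf :: "(('v \<Rightarrow> real) \<Rightarrow> real) \<Rightarrow> bool" where
  "linf f \<longleftrightarrow> (\<forall>x y s. f (\<lambda>u. x u - s * y u) = f x - s * f y)"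

lemma linf_D: "linf f \<Longrightarrow> f (\<lambda>u. x u - s * y u) = f x - s * f y"
  unfolding linf_def by blast

lemma linf_zero: assumes "linf b" shows "b (\<lambda>u. 0) = 0"
  using linf_D[OF assms, of "\<lambda>u. 0" 1 "\<lambda>u. 0"] by simp

lemma linf_neg: assumes "linf b" shows "b (\<lambda>u. - x u) = - b x"
  using linf_D[OF assms, of "\<lambda>u. 0" 1 x] linf_zero[OF assms] by simp

lemma farkas:
  assumes "finite I"
  shows "\<And>a b. \<forall>i\<in>I. linf (a i) \<Longrightarrow> linf b \<Longrightarrow> (\<forall>x. (\<forall>i\<in>I. a i x \<ge> 0) \<longrightarrow> b x \<ge> 0)
     \<Longrightarrow> \<exists>l. (\<forall>i\<in>I. l i \<ge> 0) \<and> (\<forall>x. b x = (\<Sum>i\<in>I. l i * a i x))"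
  using assms
proof (induction I rule: finite_induct)
  case empty
  have "\<forall>x. b x = 0"
  proof
    fix x
    have "b x \<ge> 0" using empty by simp
    moreover have "b (\<lambda>u. - x u) \<ge> 0" using empty by simp
    ultimately show "b x = 0" using linf_neg[OF empty(2)] by simp
  qed
  then show ?case by simp
next
  case (insert j I)
  show ?case
  proof (cases "\<forall>x. (\<forall>i\<in>I. a i x \<ge> 0) \<longrightarrow> b x \<ge> 0")
    case True
    then obtain l where l: "\<forall>i\<in>I. l i \<ge> 0" "\<forall>x. b x = (\<Sum>i\<in>I. l i * a i x)"
      using insert by blast
    let ?l = "l(j := 0)"
    have "\<forall>x. b x = (\<Sum>i\<in>insert j I. ?l i * a i x)"
    proof
      fix x
      have "(\<Sum>i\<in>insert j I. ?l i * a i x) = (\<Sum>i\<in>I. ?l i * a i x)"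
        using insert by simp
      also have "\<dots> = (\<Sum>i\<in>I. l i * a i x)"
        using insert(2) by (intro sum.cong) auto
      finally show "b x = (\<Sum>i\<in>insert j I. ?l i * a i x)" using l by simp
    qed
    then show ?thesis using l by (intro exI[of _ ?l]) auto
  next
    case False
    then obtain x0 where x0: "\<forall>i\<in>I. a i x0 \<ge> 0" "b x0 < 0" by force
    define c where "c = a j x0"
    have c: "c < 0"
    proof (rule ccontr)
      assume "\<not> c < 0"
      then have "\<forall>i\<in>insert j I. a i x0 \<ge> 0" using x0 c_def by auto
      then have "b x0 \<ge> 0" using insert(6) by blast
      then show False using x0 by simp
    qed
    define a' where "a' i x = a i x - (a i x0 / c) * a j x" for i x
    define b' where "b' x = b x - (b x0 / c) * a j x" for x
    have la: "linf (a j)" "\<forall>i\<in>I. linf (a i)" using insert(4) by auto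
    have "\<forall>i\<in>I. linf (a' i)"
    proof
      fix i assume "i \<in> I"
      then have li: "linf (a i)" using la by auto
      show "linf (a' i)" unfolding linf_def a'_def linf_D[OF li] linf_D[OF la(1)]
        by (simp add: algebra_simps)
    qed
    moreover have "linf b'" unfolding linf_def b'_def linf_D[OF insert(5)] linf_D[OF la(1)]
      by (simp add: algebra_simps)
    moreover have "\<forall>x. (\<forall>i\<in>I. a' i x \<ge> 0) \<longrightarrow> b' x \<ge> 0"
    proof (intro allI impI)
      fix x assume ax: "\<forall>i\<in>I. a' i x \<ge> 0"
      define x' where "x' = (\<lambda>u. x u - (a j x / c) * x0 u)"
      have e1: "a i x' = a' i x" if "i \<in> insert j I" for i
      proof -
        have "linf (a i)" using insert(4) that by auto
        then have "a i x' = a i x - (a j x / c) * a i x0" unfolding linf_def x'_def by blast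
        then show ?thesis unfolding a'_def by (simp add: algebra_simps)
      qed
      have "a j x' = 0" using e1[of j] unfolding a'_def c_def[symmetric] using c by simp
      then have "\<forall>i\<in>insert j I. a i x' \<ge> 0" using e1 ax by auto
      then have "b x' \<ge> 0" using insert(6) by blast
      moreover have "b x' = b x - (a j x / c) * b x0" using insert(5) unfolding linf_def x'_def by blast
      ultimately show "b' x \<ge> 0" unfolding b'_def by (simp add: algebra_simps)
    qed
    ultimately obtain m where m: "\<forall>i\<in>I. m i \<ge> 0" "\<forall>x. b' x = (\<Sum>i\<in>I. m i * a' i x)"
      using insert(3) by blast
    define l where "l = m(j := (b x0 - (\<Sum>i\<in>I. m i * a i x0)) / c)"
    have "(\<Sum>i\<in>I. m i * a i x0) \<ge> 0" using m x0 by (intro sum_nonneg) auto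
    then have "b x0 - (\<Sum>i\<in>I. m i * a i x0) \<le> 0" using x0 by simp
    then have lj: "l j \<ge> 0" unfolding l_def using c by (simp add: divide_nonpos_neg)
    have "\<forall>x. b x = (\<Sum>i\<in>insert j I. l i * a i x)"
    proof
      fix x
      have sI: "(\<Sum>i\<in>I. l i * a i x) = (\<Sum>i\<in>I. m i * a i x)"
        using insert(2) unfolding l_def by (intro sum.cong) auto
      have "b x = b' x + (b x0 / c) * a j x" unfolding b'_def by simp
      also have "\<dots> = (\<Sum>i\<in>I. m i * a i x - (m i * a i x0 / c) * a j x) + (b x0 / c) * a j x"
        using m(2) unfolding a'_def by (simp add: algebra_simps)
      also have "\<dots> = (\<Sum>i\<in>I. m i * a i x) - (\<Sum>i\<in>I. m i * a i x0) / c * a j x + (b x0 / c) * a j x"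
        by (simp add: sum_subtractf sum_distrib_right sum_divide_distrib)
      also have "\<dots> = (\<Sum>i\<in>I. m i * a i x) + l j * a j x"
        unfolding l_def using c by (simp add: field_simps)
      also have "\<dots> = (\<Sum>i\<in>insert j I. l i * a i x)" using insert(1,2) sI by simp
      finally show "b x = (\<Sum>i\<in>insert j I. l i * a i x)" .
    qed
    moreover have "\<forall>i\<in>I. l i = m i" using insert(2) by (auto simp: l_def)
    ultimately show ?thesis using lj m(1) by (intro exI[of _ l]) auto
  qed
qed

lemma interval_lr:
  fixes H :: "'e set" and al be :: "'e \<Rightarrow> real"
  assumes fin: "finite H" and ab: "\<forall>h\<in>H. al h \<le> be h"
  shows "\<And>w :: 'e \<Rightarrow> nat. card {h\<in>H. w h > 0} = n \<Longrightarrow>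
    \<exists>G Q F. finite Q \<and> (\<forall>v. v \<notin> Q \<longrightarrow> G v = 0) \<and> (\<forall>h\<in>H. w h \<le> sum G ({al h..be h} \<inter> Q))
      \<and> F \<subseteq> H \<and> (\<forall>h\<in>F. \<forall>h'\<in>F. h \<noteq> h' \<longrightarrow> {al h..be h} \<inter> {al h'..be h'} = {})
      \<and> sum G Q \<le> sum w F"
proof (induction n rule: less_induct)
  case (less n w)
  define S where "S = {h\<in>H. w h > 0}"
  have finS: "finite S" using fin S_def by simp
  show ?case
  proof (cases "S = {}")
    case True
    then have "\<forall>h\<in>H. w h = 0" unfolding S_def by auto
    then show ?thesis
      by (intro exI[of _ "\<lambda>v. 0"] exI[of _ "{}"]) auto
  next
    case False
    have "Min (be ` S) \<in> be ` S" using finS False by simp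
    then obtain h0 where h0S: "h0 \<in> S" and h0m: "be h0 = Min (be ` S)" by auto
    have h0: "h0 \<in> S" "\<forall>h\<in>S. be h0 \<le> be h" using h0S h0m finS by auto
    define p where "p = be h0"
    define \<delta> where "\<delta> = w h0"
    define N where "N = {e\<in>S. al e \<le> p}"
    define w' where "w' e = (if e \<in> N then w e - \<delta> else w e)" for e
    have h0H: "h0 \<in> H" and dpos: "\<delta> > 0" using h0 S_def \<delta>_def by auto
    have h0N: "h0 \<in> N" using h0 h0H ab unfolding N_def p_def by auto
    have pN: "p \<in> {al e..be e}" if "e \<in> N" for e using that h0 unfolding N_def p_def by auto
    have S': "{h\<in>H. w' h > 0} \<subseteq> S - {h0}"
      unfolding S_def w'_def using h0N \<delta>_def by auto
    have "card {h\<in>H. w' h > 0} < n"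
    proof -
      have "card {h\<in>H. w' h > 0} \<le> card (S - {h0})" using S' finS by (intro card_mono) auto
      also have "\<dots> < card S" using card_Diff1_less[OF finS h0(1)] .
      finally show ?thesis using less(2) S_def by simp
    qed
    note less(1)[OF this refl]
    then obtain G' Q' F' where IH: "finite Q'" "\<forall>v. v \<notin> Q' \<longrightarrow> G' v = 0"
      "\<forall>h\<in>H. w' h \<le> sum G' ({al h..be h} \<inter> Q')" "F' \<subseteq> H"
      "\<forall>h\<in>F'. \<forall>h'\<in>F'. h \<noteq> h' \<longrightarrow> {al h..be h} \<inter> {al h'..be h'} = {}"
      "sum G' Q' \<le> sum w' F'"
      by blast
    define G where "G = G'(p := G' p + \<delta>)"
    define Q where "Q = insert p Q'"
    have finQ: "finite Q" using IH Q_def by simp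
    have sumG: "sum G A = sum G' A + \<delta>" if "finite A" "p \<in> A" for A
    proof -
      have "sum G A = G p + sum G (A - {p})" using that by (simp add: sum.remove)
      also have "sum G (A - {p}) = sum G' (A - {p})" unfolding G_def by (intro sum.cong) auto
      also have "G p = G' p + \<delta>" unfolding G_def by simp
      finally show ?thesis using that by (simp add: sum.remove)
    qed
    have sumG2: "sum G A \<ge> sum G' A" if "finite A" for A
      unfolding G_def using that by (intro sum_mono) auto
    have cov: "\<forall>h\<in>H. w h \<le> sum G ({al h..be h} \<inter> Q)"
    proof
      fix h assume hH: "h \<in> H"
      have fA: "finite ({al h..be h} \<inter> Q)" using finQ by simp
      have m: "sum G' ({al h..be h} \<inter> Q') \<le> sum G' ({al h..be h} \<inter> Q)"
        using fA unfolding Q_def by (intro sum_mono2) auto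
      show "w h \<le> sum G ({al h..be h} \<inter> Q)"
      proof (cases "h \<in> N")
        case True
        then have "p \<in> {al h..be h} \<inter> Q" using pN Q_def by auto
        then have "sum G ({al h..be h} \<inter> Q) = sum G' ({al h..be h} \<inter> Q) + \<delta>" using sumG fA by blast
        moreover have "w h \<le> w' h + \<delta>" unfolding w'_def using True by simp
        moreover have "w' h \<le> sum G' ({al h..be h} \<inter> Q')" using IH(3) hH by blast
        ultimately show ?thesis using m by linarith
      next
        case False
        then have "w h = w' h" unfolding w'_def by simp
        moreover have "w' h \<le> sum G' ({al h..be h} \<inter> Q')" using IH(3) hH by blast
        ultimately show ?thesis using m sumG2[OF fA] by linarith
      qed
    qed
    have costG: "sum G Q = sum G' Q' + \<delta>"
    proof -
      have "sum G Q = sum G' Q + \<delta>" using sumG finQ Q_def by simp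
      moreover have "sum G' Q = sum G' Q'"
      proof (cases "p \<in> Q'")
        case True then show ?thesis unfolding Q_def by (simp add: insert_absorb)
      next
        case False then show ?thesis unfolding Q_def using IH(1,2) by simp
      qed
      ultimately show ?thesis by simp
    qed
    have zero: "\<forall>v. v \<notin> Q \<longrightarrow> G v = 0" using IH(2) unfolding G_def Q_def by auto
    define F'' where "F'' = {e\<in>F'. w' e > 0}"
    have finF': "finite F'" using IH(4) fin finite_subset by blast
    have F''F: "F'' \<subseteq> F'" unfolding F''_def by auto
    have sw'': "sum w' F'' = sum w' F'"
      unfolding F''_def using finF' by (intro sum.mono_neutral_left) auto
    have ww': "\<forall>e. w' e \<le> w e" unfolding w'_def by auto
    show ?thesis
    proof (cases "F'' \<inter> N = {}")
      case False
      then obtain e where e: "e \<in> F''" "e \<in> N" by blast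
      have finF'': "finite F''" using finF' F''F finite_subset by blast
      have "w' e > 0" using e F''_def by auto
      then have we: "w e = w' e + \<delta>" using e(2) unfolding w'_def by auto
      have "sum w F'' = w e + sum w (F'' - {e})" using finF'' e by (simp add: sum.remove)
      also have "sum w (F'' - {e}) \<ge> sum w' (F'' - {e})" using ww' by (intro sum_mono) auto
      ultimately have "sum w F'' \<ge> sum w' F'' + \<delta>" using finF'' e we by (simp add: sum.remove)
      then have "sum G Q \<le> sum w F''" using costG IH(6) sw'' by simp
      moreover have "F'' \<subseteq> H" using IH(4) F''F by blast
      moreover have "\<forall>h\<in>F''. \<forall>h'\<in>F''. h \<noteq> h' \<longrightarrow> {al h..be h} \<inter> {al h'..be h'} = {}"
        using IH(5) F''F by blast
      ultimately show ?thesis using cov zero finQ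
        by (intro exI[of _ G] exI[of _ Q] exI[of _ F'']) simp
    next
      case True
      define F where "F = insert h0 F''"
      have h0F: "h0 \<notin> F''" unfolding F''_def w'_def using h0N \<delta>_def by auto
      have finF'': "finite F''" using finF' F''F finite_subset by blast
      have "sum w F = \<delta> + sum w F''" unfolding F_def \<delta>_def using h0F finF'' by simp
      moreover have "sum w F'' \<ge> sum w' F''" using ww' by (intro sum_mono) auto
      ultimately have sF: "sum G Q \<le> sum w F" using costG IH(6) sw'' by simp
      have disj0: "{al h0..be h0} \<inter> {al e..be e} = {}" if "e \<in> F''" for e
      proof -
        have "w' e > 0" using that F''_def by auto
        then have "w e > 0" using ww' by (metis less_le_trans)
        moreover have "e \<in> H" using that F''F IH(4) by auto
        ultimately have "e \<in> S" unfolding S_def by simp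
        then have "al e > p" using True that unfolding N_def by auto
        then show ?thesis unfolding p_def by auto
      qed
      have "\<forall>h\<in>F. \<forall>h'\<in>F. h \<noteq> h' \<longrightarrow> {al h..be h} \<inter> {al h'..be h'} = {}"
      proof (intro ballI impI)
        fix h h' assume hh: "h \<in> F" "h' \<in> F" "h \<noteq> h'"
        show "{al h..be h} \<inter> {al h'..be h'} = {}"
        proof (cases "h = h0")
          case True
          then show ?thesis using hh disj0 unfolding F_def by auto
        next
          case False
          note F1 = this
          show ?thesis
          proof (cases "h' = h0")
            case True
            then show ?thesis using hh F1 disj0[of h] unfolding F_def by auto
          next
            case False
            then show ?thesis using hh F1 IH(5) F''F unfolding F_def by auto
          qed
        qed
      qed
      moreover have "F \<subseteq> H" unfolding F_def using h0H F''F IH(4) by auto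
      ultimately show ?thesis using cov zero finQ sF
        by (intro exI[of _ G] exI[of _ Q] exI[of _ F]) simp
    qed
  qed
qed

definition comps :: "nat \<Rightarrow> real set set \<Rightarrow> (real set \<Rightarrow> nat) \<Rightarrow> (real set \<Rightarrow> nat \<Rightarrow> real)
   \<Rightarrow> (real set \<Rightarrow> nat \<Rightarrow> real) \<Rightarrow> bool" where
  "comps d H K A B \<longleftrightarrow> (\<forall>h\<in>H. 1 \<le> K h \<and> K h \<le> d \<and> (\<forall>i<K h. A h i \<le> B h i) \<and>
      (\<forall>i<K h. \<forall>j<K h. i \<noteq> j \<longrightarrow> {A h i..B h i} \<inter> {A h j..B h j} = {}) \<and>
      h = (\<Union>i<K h. {A h i..B h i}))"

definition RR :: "(real set \<Rightarrow> nat) \<Rightarrow> (real set \<Rightarrow> nat \<Rightarrow> real) \<Rightarrow> real set \<Rightarrow> real set" where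
  "RR K B h = B h ` {..<K h}"

lemma mem_comp: assumes "comps d H K A B" "h \<in> H"
  shows "(y \<in> h) = (\<exists>i<K h. y \<in> {A h i..B h i})"
proof -
  have eq: "h = (\<Union>i<K h. {A h i..B h i})" using assms unfolding comps_def by blast
  have "(y \<in> h) = (y \<in> (\<Union>i<K h. {A h i..B h i}))"
    using eq by (rule arg_cong[where f="\<lambda>s. y \<in> s"])
  then show ?thesis by blast
qed

lemma RR_in: assumes "comps d H K A B" "h \<in> H" "r \<in> RR K B h" shows "r \<in> h"
proof -
  obtain i where i: "i < K h" "r = B h i" using assms(3) unfolding RR_def by auto
  have "A h i \<le> B h i" using assms(1,2) i unfolding comps_def by auto
  then show ?thesis using i mem_comp[OF assms(1,2)] by auto
qed

lemma RR_card: assumes "comps d H K A B" "h \<in> H" shows "card (RR K B h) \<le> d" "finite (RR K B h)"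
proof -
  have "card (RR K B h) \<le> K h" unfolding RR_def using card_image_le by fastforce
  then show "card (RR K B h) \<le> d" using assms unfolding comps_def by fastforce
  show "finite (RR K B h)" unfolding RR_def by simp
qed

lemma first_in: assumes "comps d H K A B" "h \<in> H" shows "B h 0 \<in> h" "B h 0 \<in> RR K B h"
proof -
  have "0 < K h" using assms unfolding comps_def by fastforce
  then show "B h 0 \<in> RR K B h" unfolding RR_def by auto
  then show "B h 0 \<in> h" using RR_in assms by blast
qed

lemma inter_ind:
  assumes "comps d H K A B" "h \<in> H" "e \<in> H" "h \<inter> e \<noteq> {}"
  shows "1 \<le> card {r\<in>RR K B h. r \<in> e} + card {r\<in>RR K B e. r \<in> h}"
proof -
  obtain x where x: "x \<in> h" "x \<in> e" using assms(4) by auto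
  note hh = mem_comp[OF assms(1,2)] mem_comp[OF assms(1,3)]
  obtain i where i: "i < K h" "x \<in> {A h i..B h i}" using x hh by blast
  obtain j where j: "j < K e" "x \<in> {A e j..B e j}" using x hh by blast
  show ?thesis
  proof (cases "B h i \<le> B e j")
    case True
    then have "B h i \<in> e" using i j hh by auto
    then have "B h i \<in> {r\<in>RR K B h. r \<in> e}" using i unfolding RR_def by auto
    moreover have "finite {r\<in>RR K B h. r \<in> e}" unfolding RR_def by simp
    ultimately have "card {r\<in>RR K B h. r \<in> e} \<ge> 1"
      by (metis One_nat_def Suc_leI card_gt_0_iff empty_iff)
    then show ?thesis by simp
  next
    case False
    then have "B e j \<in> h" using i j hh by auto
    then have "B e j \<in> {r\<in>RR K B e. r \<in> h}" using j unfolding RR_def by auto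
    moreover have "finite {r\<in>RR K B e. r \<in> h}" unfolding RR_def by simp
    ultimately have "card {r\<in>RR K B e. r \<in> h} \<ge> 1"
      by (metis One_nat_def Suc_leI card_gt_0_iff empty_iff)
    then show ?thesis by simp
  qed
qed

lemma pair_count:
  assumes cp: "comps d H K A B" and fin: "finite H" and SH: "S \<subseteq> H"
    and xpos: "\<forall>h\<in>H. x h \<ge> (0::real)"
    and fm: "\<forall>v\<in>(\<Union>h\<in>H. RR K B h). (\<Sum>e\<in>{e\<in>H. v \<in> e}. x e) \<le> 1"
  shows "(\<Sum>h\<in>S. x h * (\<Sum>e\<in>{e\<in>S. h \<inter> e \<noteq> {}}. x e)) \<le> 2 * d * (\<Sum>h\<in>S. x h)"
proof -
  define c where "c h e = real (card {r\<in>RR K B h. r \<in> e})" for h e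
  have finS: "finite S" using fin SH finite_subset by blast
  have one: "(\<Sum>e\<in>S. x e * c h e) \<le> d" if "h \<in> S" for h
  proof -
    have hH: "h \<in> H" using that SH by auto
    have fR: "finite (RR K B h)" using RR_card[OF cp hH] by simp
    have "c h e = (\<Sum>r\<in>RR K B h. if r \<in> e then 1 else 0)" for e
      unfolding c_def using fR by (simp add: sum.If_cases Int_def)
    then have "(\<Sum>e\<in>S. x e * c h e) = (\<Sum>e\<in>S. \<Sum>r\<in>RR K B h. if r \<in> e then x e else 0)"
      by (simp add: sum_distrib_left if_distrib cong: if_cong)
    also have "\<dots> = (\<Sum>r\<in>RR K B h. \<Sum>e\<in>S. if r \<in> e then x e else 0)"
      by (rule sum.swap)
    also have "\<dots> \<le> (\<Sum>r\<in>RR K B h. 1)"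
    proof (rule sum_mono)
      fix r assume r: "r \<in> RR K B h"
      have "(\<Sum>e\<in>S. if r \<in> e then x e else 0) = (\<Sum>e\<in>{e\<in>S. r \<in> e}. x e)"
        using finS by (simp add: sum.inter_filter)
      also have "\<dots> \<le> (\<Sum>e\<in>{e\<in>H. r \<in> e}. x e)"
        using SH xpos fin by (intro sum_mono2) auto
      also have "\<dots> \<le> 1" using fm r hH by blast
      finally show "(\<Sum>e\<in>S. if r \<in> e then x e else 0) \<le> 1" .
    qed
    also have "\<dots> = card (RR K B h)" by simp
    also have "\<dots> \<le> d" using RR_card[OF cp hH] by simp
    finally show ?thesis .
  qed
  have T1: "(\<Sum>h\<in>S. \<Sum>e\<in>S. x h * x e * c h e) \<le> d * (\<Sum>h\<in>S. x h)"
  proof -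
    have "(\<Sum>h\<in>S. \<Sum>e\<in>S. x h * x e * c h e) = (\<Sum>h\<in>S. x h * (\<Sum>e\<in>S. x e * c h e))"
      by (simp add: sum_distrib_left mult.assoc)
    also have "\<dots> \<le> (\<Sum>h\<in>S. x h * d)"
      using one xpos SH by (intro sum_mono mult_left_mono) auto
    also have "\<dots> = d * (\<Sum>h\<in>S. x h)" by (simp add: sum_distrib_left mult.commute)
    finally show ?thesis .
  qed
  have T2: "(\<Sum>h\<in>S. \<Sum>e\<in>S. x h * x e * c e h) = (\<Sum>h\<in>S. \<Sum>e\<in>S. x h * x e * c h e)"
    by (subst sum.swap) (simp add: mult.commute)
  have "(\<Sum>h\<in>S. x h * (\<Sum>e\<in>{e\<in>S. h \<inter> e \<noteq> {}}. x e))
      = (\<Sum>h\<in>S. \<Sum>e\<in>S. x h * x e * (if h \<inter> e \<noteq> {} then 1 else 0))"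
    using finS by (simp add: sum.inter_filter sum_distrib_left if_distrib cong: if_cong)
  also have "\<dots> \<le> (\<Sum>h\<in>S. \<Sum>e\<in>S. x h * x e * c h e + x h * x e * c e h)"
  proof (intro sum_mono)
    fix h e assume "h \<in> S" "e \<in> S"
    then have hH: "h \<in> H" "e \<in> H" using SH by auto
    then have xx: "x h * x e \<ge> 0" using xpos by simp
    have "(if h \<inter> e \<noteq> {} then 1 else 0) \<le> c h e + c e h"
      using inter_ind[OF cp hH] unfolding c_def by (auto simp del: of_nat_add simp add: of_nat_add[symmetric])
    then have "x h * x e * (if h \<inter> e \<noteq> {} then 1 else 0) \<le> x h * x e * (c h e + c e h)"
      using xx by (rule mult_left_mono)
    then show "x h * x e * (if h \<inter> e \<noteq> {} then 1 else 0) \<le> x h * x e * c h e + x h * x e * c e h"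
      by (simp add: algebra_simps)
  qed
  also have "\<dots> = (\<Sum>h\<in>S. \<Sum>e\<in>S. x h * x e * c h e) + (\<Sum>h\<in>S. \<Sum>e\<in>S. x h * x e * c e h)"
    by (simp add: sum.distrib)
  also have "\<dots> \<le> 2 * d * (\<Sum>h\<in>S. x h)" using T1 T2 by simp
  finally show ?thesis .
qed

lemma nu_fin: assumes "finite H" shows "finite {sum w M | M. matching H M}"
proof -
  have "{sum w M | M. matching H M} \<subseteq> sum w ` Pow H" unfolding matching_def by auto
  then show ?thesis using assms finite_subset by blast
qed

lemma nu_ge: assumes "finite H" "matching H M" shows "sum w M \<le> nu_w H w"
  unfolding nu_w_def using nu_fin[OF assms(1)] assms(2) by (intro Max_ge) auto

lemma nu_att: assumes "finite H" shows "\<exists>M. matching H M \<and> sum w M = nu_w H w"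
proof -
  have "matching H {}" unfolding matching_def by simp
  then have "{sum w M | M. matching H M} \<noteq> {}" by blast
  then have "nu_w H w \<in> {sum w M | M. matching H M}"
    unfolding nu_w_def using nu_fin[OF assms] by (intro Max_in) auto
  then show ?thesis by force
qed

lemma frac_lr:
  assumes cp: "comps d H K A B" and fin: "finite H"
    and xpos: "\<forall>h\<in>H. x h \<ge> (0::real)"
    and fm: "\<forall>v\<in>(\<Union>h\<in>H. RR K B h). (\<Sum>e\<in>{e\<in>H. v \<in> e}. x e) \<le> 1"
  shows "\<And>w. card {h\<in>H. w h > 0} = n \<Longrightarrow> (\<Sum>h\<in>H. real (w h) * x h) \<le> 2 * d * nu_w H w"
proof (induction n rule: less_induct)
  case (less n w)
  define S where "S = {h\<in>H. w h > 0}"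
  have finS: "finite S" using fin S_def by simp
  have SH: "S \<subseteq> H" unfolding S_def by auto
  have sumS: "(\<Sum>h\<in>H. real (w h) * x h) = (\<Sum>h\<in>S. real (w h) * x h)"
    unfolding S_def using fin by (intro sum.mono_neutral_right) auto
  show ?case
  proof (cases "(\<Sum>h\<in>S. x h) = 0")
    case True
    then have "\<forall>h\<in>S. x h = 0" using sum_nonneg_eq_0_iff[OF finS] xpos SH by blast
    then have "(\<Sum>h\<in>H. real (w h) * x h) = 0" using sumS by simp
    then show ?thesis by simp
  next
    case False
    define NB where "NB h = (\<Sum>e\<in>{e\<in>S. h \<inter> e \<noteq> {}}. x e)" for h
    have "\<exists>h0\<in>S. x h0 > 0 \<and> NB h0 \<le> 2 * d"
    proof (rule ccontr)
      assume "\<not> ?thesis"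
      then have bad: "\<forall>h\<in>S. x h > 0 \<longrightarrow> NB h > 2 * d" by force
      obtain h1 where h1: "h1 \<in> S" "x h1 \<noteq> 0" using False by (meson sum.neutral)
      then have h1p: "x h1 > 0" using xpos SH by force
      have "(\<Sum>h\<in>S. x h * (2 * d)) < (\<Sum>h\<in>S. x h * NB h)"
      proof (rule sum_strict_mono_ex1[OF finS])
        show "\<forall>h\<in>S. x h * (2 * d) \<le> x h * NB h"
        proof
          fix h assume hS: "h \<in> S"
          then have "x h \<ge> 0" using xpos SH by auto
          then show "x h * (2 * d) \<le> x h * NB h"
            using bad hS by (cases "x h = 0") (auto intro: mult_left_mono)
        qed
        show "\<exists>h\<in>S. x h * (2 * d) < x h * NB h" using h1 h1p bad by (intro bexI[of _ h1]) auto
      qed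
      moreover have "(\<Sum>h\<in>S. x h * NB h) \<le> 2 * d * (\<Sum>h\<in>S. x h)"
        unfolding NB_def by (rule pair_count[OF cp fin SH xpos fm])
      ultimately show False by (simp add: sum_distrib_left sum_distrib_right mult.commute)
    qed
    then obtain h0 where h0: "h0 \<in> S" "x h0 > 0" "NB h0 \<le> 2 * d" by blast
    have h0H: "h0 \<in> H" using h0 SH by auto
    define \<delta> where "\<delta> = w h0"
    define N where "N = {e\<in>S. h0 \<inter> e \<noteq> {}}"
    define w' where "w' e = (if e \<in> N then w e - \<delta> else w e)" for e
    have h0N: "h0 \<in> N" unfolding N_def using h0 first_in[OF cp h0H] by auto
    have NS: "N \<subseteq> S" unfolding N_def by auto
    have S': "{h\<in>H. w' h > 0} \<subseteq> S - {h0}"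
      unfolding S_def w'_def using h0N \<delta>_def by auto
    have "card {h\<in>H. w' h > 0} < n"
    proof -
      have "card {h\<in>H. w' h > 0} \<le> card (S - {h0})" using S' finS by (intro card_mono) auto
      also have "\<dots> < card S" using card_Diff1_less[OF finS h0(1)] .
      finally show ?thesis using less(2) S_def by simp
    qed
    note IH = less(1)[OF this refl]
    have ww': "\<forall>e. w' e \<le> w e" unfolding w'_def by auto
    have step1: "(\<Sum>h\<in>H. real (w h) * x h) \<le> (\<Sum>h\<in>H. real (w' h) * x h) + \<delta> * (\<Sum>h\<in>N. x h)"
    proof -
      have "(\<Sum>h\<in>H. real (w h) * x h) \<le> (\<Sum>h\<in>H. real (w' h) * x h + (if h \<in> N then \<delta> * x h else 0))"
      proof (intro sum_mono)
        fix h assume hH: "h \<in> H"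
        have "real (w h) \<le> real (w' h) + (if h \<in> N then \<delta> else 0)" unfolding w'_def by auto
        then have "real (w h) * x h \<le> (real (w' h) + (if h \<in> N then \<delta> else 0)) * x h"
          using xpos hH by (intro mult_right_mono) auto
        then show "real (w h) * x h \<le> real (w' h) * x h + (if h \<in> N then \<delta> * x h else 0)"
          by (auto simp: algebra_simps)
      qed
      also have "\<dots> = (\<Sum>h\<in>H. real (w' h) * x h) + (\<Sum>h\<in>H. if h \<in> N then \<delta> * x h else 0)"
        by (simp add: sum.distrib)
      also have "(\<Sum>h\<in>H. if h \<in> N then \<delta> * x h else 0) = (\<Sum>h\<in>N. \<delta> * x h)"
        using fin NS SH by (simp add: sum.If_cases Int_absorb1)
      also have "\<dots> = \<delta> * (\<Sum>h\<in>N. x h)" by (simp add: sum_distrib_left)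
      finally show ?thesis .
    qed
    have Nb: "(\<Sum>h\<in>N. x h) \<le> 2 * d" using h0(3) unfolding NB_def N_def .
    have nu_step: "nu_w H w' + \<delta> \<le> nu_w H w"
    proof -
      obtain M where M: "matching H M" "sum w' M = nu_w H w'" using nu_att[OF fin] by blast
      have MH: "M \<subseteq> H" and pw: "pairwise disjnt M" using M unfolding matching_def by auto
      have finM: "finite M" using MH fin finite_subset by blast
      define M'' where "M'' = {e\<in>M. w' e > 0}"
      have M''M: "M'' \<subseteq> M" unfolding M''_def by auto
      have finM'': "finite M''" using finM M''M finite_subset by blast
      have sw'': "sum w' M'' = sum w' M"
        unfolding M''_def using finM by (intro sum.mono_neutral_left) auto
      have mM'': "matching H M''" using MH pw M''M unfolding matching_def by (auto intro: pairwise_subset)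
      show ?thesis
      proof (cases "M'' \<inter> N = {}")
        case False
        then obtain e where e: "e \<in> M''" "e \<in> N" by blast
        have "w' e > 0" using e M''_def by auto
        then have we: "w e = w' e + \<delta>" using e(2) unfolding w'_def by auto
        have "sum w M'' = w e + sum w (M'' - {e})" using finM'' e by (simp add: sum.remove)
        moreover have "sum w (M'' - {e}) \<ge> sum w' (M'' - {e})" using ww' by (intro sum_mono) auto
        moreover have "sum w' M'' = w' e + sum w' (M'' - {e})" using finM'' e by (simp add: sum.remove)
        ultimately have "sum w M'' \<ge> sum w' M'' + \<delta>" using we by simp
        moreover have "sum w M'' \<le> nu_w H w" using nu_ge[OF fin mM''] .
        ultimately show ?thesis using M(2) sw'' by simp
      next
        case True
        define M3 where "M3 = insert h0 M''"
        have h0M: "h0 \<notin> M''" unfolding M''_def w'_def using h0N \<delta>_def by auto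
        have "sum w M3 = \<delta> + sum w M''" unfolding M3_def \<delta>_def using h0M finM'' by simp
        moreover have "sum w M'' \<ge> sum w' M''" using ww' by (intro sum_mono) auto
        moreover have "matching H M3"
        proof -
          have "disjnt h0 e" if "e \<in> M''" for e
          proof -
            have "w' e > 0" using that M''_def by auto
            then have "w e > 0" using ww' by (metis less_le_trans)
            moreover have "e \<in> H" using that M''M MH by auto
            ultimately have "e \<in> S" unfolding S_def by simp
            then show ?thesis using True that unfolding N_def disjnt_def by auto
          qed
          then show ?thesis using mM'' h0H unfolding matching_def M3_def
            by (auto simp: pairwise_insert disjnt_sym)
        qed
        then have "sum w M3 \<le> nu_w H w" using nu_ge[OF fin] by blast
        ultimately show ?thesis using M(2) sw'' by simp
      qed
    qed
    have a: "real \<delta> * (\<Sum>h\<in>N. x h) \<le> real \<delta> * (2 * d)" by (rule mult_left_mono[OF Nb]) simp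
    have c0: "2 * d * (nu_w H w' + \<delta>) \<le> 2 * d * nu_w H w" using nu_step by (rule mult_le_mono2)
    have c: "real (2 * d * nu_w H w') + real \<delta> * (2 * d) \<le> real (2 * d * nu_w H w)"
    proof -
      have "real (2 * d * (nu_w H w' + \<delta>)) \<le> real (2 * d * nu_w H w)" using c0 by (simp only: of_nat_le_iff)
      then show ?thesis by (simp add: algebra_simps)
    qed
    have "(\<Sum>h\<in>H. real (w h) * x h) \<le> real (2 * d * nu_w H w)"
      using step1 IH a c by linarith
    then show ?thesis by simp
  qed
qed

theorem corollary1p10:
  fixes d :: nat and H :: "real set set" and w :: "real set \<Rightarrow> nat"
  assumes "d \<ge> 1" and "finite H" and "\<forall>h\<in>H. d_interval d h"
  shows "tau_w H w \<le> 2 * d^2 * nu_w H w"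
proof -
  note fin = assms(2)
  define Pd where "Pd h k a b \<longleftrightarrow> 1 \<le> k \<and> k \<le> d \<and> (\<forall>i<k. a i \<le> b i) \<and>
      (\<forall>i<k. \<forall>j<k. i \<noteq> j \<longrightarrow> {a i..b i} \<inter> {a j..b j} = {}) \<and> h = (\<Union>i<k. {a i..b i})"
    for h :: "real set" and k :: nat and a b :: "nat \<Rightarrow> real"
  have ex: "\<forall>h\<in>H. \<exists>k a b. Pd h k a b" using assms(3) unfolding d_interval_def Pd_def .
  define rep where "rep h = (SOME kab. Pd h (fst kab) (fst (snd kab)) (snd (snd kab)))" for h
  have rep: "Pd h (fst (rep h)) (fst (snd (rep h))) (snd (snd (rep h)))" if hH: "h \<in> H" for h
  proof -
    obtain k a b where "Pd h k a b" using ex hH by blast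
    then have "Pd h (fst (k,a,b)) (fst (snd (k,a,b))) (snd (snd (k,a,b)))" by simp
    then show ?thesis unfolding rep_def by (rule someI)
  qed
  define K where "K h = fst (rep h)" for h
  define A where "A h = fst (snd (rep h))" for h
  define B where "B h = snd (snd (rep h))" for h
  have "comps d H K A B" unfolding comps_def K_def A_def B_def using rep unfolding Pd_def by blast
  note cp = this
  define PP where "PP = (\<Union>h\<in>H. RR K B h)"
  have finPP: "finite PP" unfolding PP_def using fin RR_card[OF cp] by auto
  define \<nu> where "\<nu> = nu_w H w"
  define t where "t = real (2 * d * \<nu>)"
  have FB: "(\<Sum>h\<in>H. real (w h) * x h) \<le> t"
    if "\<forall>h\<in>H. x h \<ge> 0" "\<forall>v\<in>PP. (\<Sum>e\<in>{e\<in>H. v \<in> e}. x e) \<le> 1" for x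
    using frac_lr[OF cp fin that(1) that(2)[unfolded PP_def] refl] unfolding t_def \<nu>_def by simp
  define I :: "(real + real set) option set" where
    "I = Some ` Inl ` PP \<union> Some ` Inr ` H \<union> {None}"
  define a :: "(real + real set) option \<Rightarrow> (real set option \<Rightarrow> real) \<Rightarrow> real" where
    "a i y = (case i of None \<Rightarrow> y None
       | Some (Inl v) \<Rightarrow> (\<Sum>h\<in>{h\<in>H. v \<in> h}. y (Some h)) + y None
       | Some (Inr h) \<Rightarrow> - y (Some h))" for i y
  define b :: "(real set option \<Rightarrow> real) \<Rightarrow> real" where
    "b y = (\<Sum>h\<in>H. real (w h) * y (Some h)) + t * y None" for y
  have finI: "finite I" unfolding I_def using finPP fin by simp
  have la: "\<forall>i\<in>I. linf (a i)"
  proof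
    fix i :: "(real + real set) option"
    show "linf (a i)"
    proof (cases i)
      case None then show ?thesis unfolding linf_def a_def by simp
    next
      case (Some j)
      then show ?thesis
      proof (cases j)
        case (Inl v)
        then show ?thesis unfolding linf_def a_def using Some
          by (simp add: sum_subtractf sum_distrib_left algebra_simps)
      next
        case (Inr h)
        then show ?thesis unfolding linf_def a_def using Some by simp
      qed
    qed
  qed
  have lb: "linf b" unfolding linf_def b_def
    by (simp add: sum_subtractf sum_distrib_left algebra_simps)
  have hyp: "\<forall>y. (\<forall>i\<in>I. a i y \<ge> 0) \<longrightarrow> b y \<ge> 0"
  proof (intro allI impI)
    fix y assume ay: "\<forall>i\<in>I. a i y \<ge> 0"
    define x where "x h = - y (Some h)" for h
    define y0 where "y0 = y None"
    have xpos: "\<forall>h\<in>H. x h \<ge> 0"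
    proof
      fix h assume "h \<in> H"
      then have "Some (Inr h) \<in> I" unfolding I_def by auto
      then show "x h \<ge> 0" using ay unfolding a_def x_def by fastforce
    qed
    have y0pos: "y0 \<ge> 0" using ay unfolding I_def a_def y0_def by auto
    have pt: "(\<Sum>e\<in>{e\<in>H. v \<in> e}. x e) \<le> y0" if "v \<in> PP" for v
    proof -
      have "Some (Inl v) \<in> I" using that unfolding I_def by auto
      then have "(\<Sum>h\<in>{h\<in>H. v \<in> h}. y (Some h)) + y None \<ge> 0" using ay unfolding a_def by fastforce
      then show ?thesis unfolding x_def y0_def by (simp add: sum_negf)
    qed
    have bx: "b y = t * y0 - (\<Sum>h\<in>H. real (w h) * x h)"
      unfolding b_def x_def y0_def by (simp add: sum_negf)
    show "b y \<ge> 0"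
    proof (cases "y0 = 0")
      case True
      have "\<forall>h\<in>H. x h = 0"
      proof
        fix h assume hH: "h \<in> H"
        have v: "B h 0 \<in> PP" "B h 0 \<in> h" using first_in[OF cp hH] unfolding PP_def using hH by auto
        have finE: "finite {e\<in>H. B h 0 \<in> e}" using fin by simp
        have "(\<Sum>e\<in>{e\<in>H. B h 0 \<in> e}. x e) \<le> 0" using pt[OF v(1)] True by simp
        moreover have "(\<Sum>e\<in>{e\<in>H. B h 0 \<in> e}. x e) \<ge> 0" using xpos by (intro sum_nonneg) auto
        ultimately have "(\<Sum>e\<in>{e\<in>H. B h 0 \<in> e}. x e) = 0" by simp
        then have "\<forall>e\<in>{e\<in>H. B h 0 \<in> e}. x e = 0"
          using sum_nonneg_eq_0_iff[OF finE] xpos by auto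
        then show "x h = 0" using hH v by auto
      qed
      then show ?thesis using bx True by simp
    next
      case False
      then have y0p: "y0 > 0" using y0pos by simp
      define x' where "x' h = x h / y0" for h
      have "\<forall>h\<in>H. x' h \<ge> 0" unfolding x'_def using xpos y0p by auto
      moreover have "\<forall>v\<in>PP. (\<Sum>e\<in>{e\<in>H. v \<in> e}. x' e) \<le> 1"
      proof
        fix v assume "v \<in> PP"
        then have "(\<Sum>e\<in>{e\<in>H. v \<in> e}. x e) \<le> y0" by (rule pt)
        then show "(\<Sum>e\<in>{e\<in>H. v \<in> e}. x' e) \<le> 1"
          unfolding x'_def using y0p by (simp add: sum_divide_distrib[symmetric])
      qed
      ultimately have "(\<Sum>h\<in>H. real (w h) * x' h) \<le> t" by (rule FB)
      then have "(\<Sum>h\<in>H. real (w h) * x h) / y0 \<le> t"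
        unfolding x'_def by (simp add: sum_divide_distrib)
      then have "(\<Sum>h\<in>H. real (w h) * x h) \<le> t * y0" using y0p by (simp add: divide_le_eq)
      then show ?thesis using bx by simp
    qed
  qed
  obtain l where l: "\<forall>i\<in>I. l i \<ge> 0" "\<forall>y. b y = (\<Sum>i\<in>I. l i * a i y)"
    using farkas[OF finI la lb hyp] by blast
  define g where "g v = l (Some (Inl v))" for v
  have gpos: "\<forall>v\<in>PP. g v \<ge> 0" using l(1) unfolding g_def I_def by auto
  have Isplit: "(\<Sum>i\<in>I. f i) = (\<Sum>v\<in>PP. f (Some (Inl v))) + (\<Sum>h\<in>H. f (Some (Inr h))) + f None"
    for f :: "(real + real set) option \<Rightarrow> real"
  proof -
    have d1: "(Some ` Inl ` PP) \<inter> (Some ` Inr ` H) = {}" by auto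
    have "(\<Sum>i\<in>I. f i) = (\<Sum>i\<in>Some ` Inl ` PP \<union> Some ` Inr ` H. f i) + f None"
      unfolding I_def using finPP fin by (subst sum.union_disjoint) auto
    also have "(\<Sum>i\<in>Some ` Inl ` PP \<union> Some ` Inr ` H. f i) = (\<Sum>i\<in>Some ` Inl ` PP. f i) + (\<Sum>i\<in>Some ` Inr ` H. f i)"
      using finPP fin d1 by (intro sum.union_disjoint) auto
    also have "(\<Sum>i\<in>Some ` Inl ` PP. f i) = (\<Sum>v\<in>PP. f (Some (Inl v)))"
      by (subst image_image, subst sum.reindex) (auto simp: inj_on_def)
    also have "(\<Sum>i\<in>Some ` Inr ` H. f i) = (\<Sum>h\<in>H. f (Some (Inr h)))"
      by (subst image_image, subst sum.reindex) (auto simp: inj_on_def)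
    finally show ?thesis .
  qed
  have cover: "(\<Sum>v\<in>PP \<inter> h. g v) \<ge> w h" if hH: "h \<in> H" for h
  proof -
    define y :: "real set option \<Rightarrow> real" where "y u = (if u = Some h then 1 else 0)" for u
    have "real (w h) = b y" unfolding b_def y_def using hH fin by (simp add: if_distrib sum.delta cong: if_cong)
    also have "\<dots> = (\<Sum>i\<in>I. l i * a i y)" using l(2) by blast
    also have "\<dots> = (\<Sum>v\<in>PP. l (Some (Inl v)) * a (Some (Inl v)) y)
        + (\<Sum>h'\<in>H. l (Some (Inr h')) * a (Some (Inr h')) y) + l None * a None y" by (rule Isplit)
    also have "(\<Sum>v\<in>PP. l (Some (Inl v)) * a (Some (Inl v)) y) = (\<Sum>v\<in>PP. if v \<in> h then g v else 0)"
    proof (intro sum.cong refl)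
      fix v assume "v \<in> PP"
      have "(\<Sum>h'\<in>{h'\<in>H. v \<in> h'}. y (Some h')) = (if v \<in> h then 1 else 0)"
        unfolding y_def using hH fin by (simp add: sum.delta)
      then show "l (Some (Inl v)) * a (Some (Inl v)) y = (if v \<in> h then g v else 0)"
        unfolding a_def g_def by (simp add: y_def)
    qed
    also have "(\<Sum>v\<in>PP. if v \<in> h then g v else 0) = (\<Sum>v\<in>PP \<inter> h. g v)"
      using finPP by (simp add: sum.If_cases)
    also have "(\<Sum>h'\<in>H. l (Some (Inr h')) * a (Some (Inr h')) y) \<le> 0"
    proof (intro sum_nonpos)
      fix h' assume "h' \<in> H"
      then have "l (Some (Inr h')) \<ge> 0" using l(1) unfolding I_def by auto
      then show "l (Some (Inr h')) * a (Some (Inr h')) y \<le> 0" unfolding a_def y_def by simp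
    qed
    also have "l None * a None y = 0" unfolding a_def y_def by simp
    finally show ?thesis by simp
  qed
  have cost: "(\<Sum>v\<in>PP. g v) \<le> t"
  proof -
    define y :: "real set option \<Rightarrow> real" where "y u = (if u = None then 1 else 0)" for u
    have "t = b y" unfolding b_def y_def by simp
    also have "\<dots> = (\<Sum>i\<in>I. l i * a i y)" using l(2) by blast
    also have "\<dots> = (\<Sum>v\<in>PP. l (Some (Inl v)) * a (Some (Inl v)) y)
        + (\<Sum>h'\<in>H. l (Some (Inr h')) * a (Some (Inr h')) y) + l None * a None y" by (rule Isplit)
    also have "(\<Sum>v\<in>PP. l (Some (Inl v)) * a (Some (Inl v)) y) = (\<Sum>v\<in>PP. g v)"
      unfolding a_def g_def y_def by simp
    also have "(\<Sum>h'\<in>H. l (Some (Inr h')) * a (Some (Inr h')) y) = 0"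
      unfolding a_def y_def by simp
    also have "l None * a None y = l None" unfolding a_def y_def by simp
    finally have "t = (\<Sum>v\<in>PP. g v) + l None" by simp
    moreover have "l None \<ge> 0" using l(1) unfolding I_def by auto
    ultimately show ?thesis by simp
  qed
  have dpos: "real d > 0" using assms(1) by simp
  have round: "\<exists>i<K h. real (w h) \<le> d * (\<Sum>v\<in>PP \<inter> {A h i..B h i}. g v)" if hH: "h \<in> H" for h
  proof (rule ccontr)
    assume "\<not> ?thesis"
    then have lt: "\<forall>i<K h. d * (\<Sum>v\<in>PP \<inter> {A h i..B h i}. g v) < real (w h)" by force
    have Kh: "1 \<le> K h" "K h \<le> d" using cp hH unfolding comps_def by auto
    have un: "PP \<inter> h = (\<Union>i\<in>{..<K h}. PP \<inter> {A h i..B h i})" using mem_comp[OF cp hH] by blast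
    have dj: "\<forall>i\<in>{..<K h}. \<forall>j\<in>{..<K h}. i \<noteq> j \<longrightarrow> (PP \<inter> {A h i..B h i}) \<inter> (PP \<inter> {A h j..B h j}) = {}"
      using cp hH unfolding comps_def by blast
    have "(\<Sum>v\<in>PP \<inter> h. g v) = (\<Sum>i\<in>{..<K h}. \<Sum>v\<in>PP \<inter> {A h i..B h i}. g v)"
      unfolding un using finPP dj by (intro sum.UNION_disjoint) auto
    then have "d * (\<Sum>v\<in>PP \<inter> h. g v) = (\<Sum>i\<in>{..<K h}. d * (\<Sum>v\<in>PP \<inter> {A h i..B h i}. g v))"
      by (simp add: sum_distrib_left)
    also have "\<dots> < (\<Sum>i\<in>{..<K h}. real (w h))"
      using lt Kh by (intro sum_strict_mono) (auto simp: lessThan_empty_iff)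
    also have "\<dots> = K h * real (w h)" by simp
    also have "\<dots> \<le> d * real (w h)" using Kh by (intro mult_right_mono) auto
    finally have "(\<Sum>v\<in>PP \<inter> h. g v) < w h" using dpos by simp
    then show False using cover[OF hH] by simp
  qed
  define ic where "ic h = (SOME i. i < K h \<and> real (w h) \<le> d * (\<Sum>v\<in>PP \<inter> {A h i..B h i}. g v))" for h
  have ic: "ic h < K h \<and> real (w h) \<le> d * (\<Sum>v\<in>PP \<inter> {A h (ic h)..B h (ic h)}. g v)" if "h \<in> H" for h
    unfolding ic_def using round[OF that] by (rule someI_ex)
  define al where "al h = A h (ic h)" for h
  define be where "be h = B h (ic h)" for h
  have ab: "\<forall>h\<in>H. al h \<le> be h"
  proof
    fix h assume hH: "h \<in> H"
    have "ic h < K h" using ic[OF hH] by (rule conjunct1)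
    moreover have "\<forall>i<K h. A h i \<le> B h i" using cp hH unfolding comps_def by simp
    ultimately show "al h \<le> be h" unfolding al_def be_def by simp
  qed
  have sub: "{al h..be h} \<subseteq> h" if hH: "h \<in> H" for h
  proof
    fix z assume "z \<in> {al h..be h}"
    moreover have "ic h < K h" using ic[OF hH] by (rule conjunct1)
    ultimately have "\<exists>i<K h. z \<in> {A h i..B h i}" unfolding al_def be_def by blast
    then show "z \<in> h" using mem_comp[OF cp hH] by simp
  qed
  have wb: "real (w h) \<le> d * (\<Sum>v\<in>PP \<inter> {al h..be h}. g v)" if hH: "h \<in> H" for h
    using ic[OF hH] unfolding al_def be_def by (rule conjunct2)
  obtain G Q F where GQF: "finite Q" "\<forall>v. v \<notin> Q \<longrightarrow> G v = 0" "\<forall>h\<in>H. w h \<le> sum G ({al h..be h} \<inter> Q)"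
      "F \<subseteq> H" "\<forall>h\<in>F. \<forall>h'\<in>F. h \<noteq> h' \<longrightarrow> {al h..be h} \<inter> {al h'..be h'} = {}"
      "sum G Q \<le> sum w F"
    using interval_lr[OF fin ab refl, where w=w] by (elim exE conjE) blast
  have finF: "finite F" using GQF(4) fin finite_subset by blast
  have "real (sum w F) \<le> (\<Sum>h\<in>F. d * (\<Sum>v\<in>PP \<inter> {al h..be h}. g v))"
    unfolding of_nat_sum using wb GQF(4) by (intro sum_mono) auto
  also have "\<dots> = d * (\<Sum>h\<in>F. \<Sum>v\<in>PP \<inter> {al h..be h}. g v)" by (simp add: sum_distrib_left)
  also have "(\<Sum>h\<in>F. \<Sum>v\<in>PP \<inter> {al h..be h}. g v) = (\<Sum>v\<in>(\<Union>h\<in>F. PP \<inter> {al h..be h}). g v)"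
  proof (rule sum.UNION_disjoint[symmetric])
    show "finite F" by (rule finF)
    show "\<forall>h\<in>F. finite (PP \<inter> {al h..be h})" using finPP by simp
    show "\<forall>i\<in>F. \<forall>j\<in>F. i \<noteq> j \<longrightarrow> (PP \<inter> {al i..be i}) \<inter> (PP \<inter> {al j..be j}) = {}"
      using GQF(5) by blast
  qed
  also have "\<dots> \<le> (\<Sum>v\<in>PP. g v)" using finPP gpos by (intro sum_mono2) auto
  also have "\<dots> \<le> t" by (rule cost)
  finally have "real (sum w F) \<le> d * t" using dpos by simp
  also have "d * t = real (2 * d^2 * \<nu>)" unfolding t_def by (simp add: power2_eq_square)
  finally have Fb: "sum w F \<le> 2 * d^2 * \<nu>" by (simp only: of_nat_le_iff)
  have suppQ: "supp_g G \<subseteq> Q" unfolding supp_g_def using GQF(2) by auto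
  have wc: "w_cover H w G"
    unfolding w_cover_def
  proof (intro conjI ballI)
    show "finite (supp_g G)" using suppQ GQF(1) finite_subset by blast
    fix h assume hH: "h \<in> H"
    have "w h \<le> sum G ({al h..be h} \<inter> Q)" using GQF(3) hH by blast
    also have "\<dots> \<le> sum G (h \<inter> Q)" using sub[OF hH] GQF(1) by (intro sum_mono2) auto
    also have "\<dots> = sum G (h \<inter> supp_g G)"
      using suppQ GQF(1) by (intro sum.mono_neutral_right) (auto simp: supp_g_def)
    finally show "w h \<le> sum G (h \<inter> supp_g G)" .
  qed
  have "sum G (supp_g G) = sum G Q"
    using suppQ GQF(1) by (intro sum.mono_neutral_left) (auto simp: supp_g_def)
  have "tau_w H w \<le> sum G (supp_g G)"
    unfolding tau_w_def using wc by (intro cInf_lower) auto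
  also have "\<dots> = sum G Q"
    using suppQ GQF(1) by (intro sum.mono_neutral_left) (auto simp: supp_g_def)
  also have "\<dots> \<le> sum w F" by (rule GQF(6))
  also have "\<dots> \<le> 2 * d^2 * \<nu>" by (rule Fb)
  finally show ?thesis unfolding \<nu>_def .
qed

end
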